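(* Let $K$ be a field of characteristic $0$, $e\ge 2$, $A,B,C\in M_e(K)$ and $d_1,d_2\in(\mathbb{Z}/e\mathbb{Z})^\times$. Then \[ A\overset{d_1}{\ast}(B\overset{d_2}{\ast}C)=(A\overset{-d_2^{-1}d_1}{\ast}B)\overset{d_2}{\ast}C. \] In particular $A\overset{d_1}{\ast}(B\overset{-1}{\ast}C)=(A\overset{d_1}{\ast}B)\overset{-1}{\ast}C$, and hence the $(-1)$-composition $\overset{-1}{\ast}$ is associative.
   Context: For $A=[a_{i,j}],B=[b_{i,j}]\in M_e(K)$ (indices modulo $e$) and $d\in(\mathbb{Z}/e\mathbb{Z})\setminus\{0\}$, the $d$-composition is $A\overset{d}{\ast}B=\big[\sum_{s=0}^{e-1}\sum_{t=0}^{e-1}a_{s,t}b_{ds+i,dt+j}\big]_{0\le i,j\le e-1}$. *)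

theory Defs
  imports "HOL-Number_Theory.Number_Theory"
begin

text \<open>An e x e matrix over K is represented by a function nat => nat => K,
  of which only the entries with indices < e are relevant.\<close>

definition dcomp :: "nat \<Rightarrow> int \<Rightarrow> (nat \<Rightarrow> nat \<Rightarrow> 'a::comm_ring_1)
    \<Rightarrow> (nat \<Rightarrow> nat \<Rightarrow> 'a) \<Rightarrow> (nat \<Rightarrow> nat \<Rightarrow> 'a)" where
  "dcomp e d A B = (\<lambda>i j. \<Sum>s<e. \<Sum>t<e.
      A s t * B (nat ((d * int s + int i) mod int e)) (nat ((d * int t + int j) mod int e)))"

definition mat_eq :: "nat \<Rightarrow> (nat \<Rightarrow> nat \<Rightarrow> 'a) \<Rightarrow> (nat \<Rightarrow> nat \<Rightarrow> 'a) \<Rightarrow> bool" where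
  "mat_eq e X Y \<longleftrightarrow> (\<forall>i<e. \<forall>j<e. X i j = Y i j)"

end

theory Submission
  imports Defs
begin

lemma modfix: "(e::nat) > 0 \<Longrightarrow> int (nat (x mod int e)) = x mod int e"
  by simp

lemma reidx:
  fixes h :: "nat \<Rightarrow> nat \<Rightarrow> 'a::comm_ring_1" and e :: nat and c :: int
  assumes "e > 0"
  shows "(\<Sum>p<e. h (nat ((c + int p) mod int e)) p) = (\<Sum>u<e. h u (nat ((int u - c) mod int e)))"
proof (rule sum.reindex_bij_witness[where j="\<lambda>p. nat ((c + int p) mod int e)" and i="\<lambda>u. nat ((int u - c) mod int e)"])
  fix a assume a: "a \<in> {..<e}"
  have "((c + int a) mod int e - c) mod int e = int a"
    using a by (simp add: mod_diff_left_eq)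
  then show "nat ((int (nat ((c + int a) mod int e)) - c) mod int e) = a"
    using assms by simp
  then show "h (nat ((c + int a) mod int e)) (nat ((int (nat ((c + int a) mod int e)) - c) mod int e)) = h (nat ((c + int a) mod int e)) a"
    by simp
next
  fix a assume a: "a \<in> {..<e}"
  have "(c + (int a - c) mod int e) mod int e = int a"
    using a by (simp add: mod_add_right_eq)
  then show "nat ((c + int (nat ((int a - c) mod int e))) mod int e) = a"
    using assms by simp
next
  fix a assume "a \<in> {..<e}"
  then show "nat ((int a - c) mod int e) \<in> {..<e}" using assms
    by (simp add: nat_less_iff)
next
  fix a assume "a \<in> {..<e}"
  then show "nat ((c + int a) mod int e) \<in> {..<e}" using assms
    by (simp add: nat_less_iff)
qed

lemma swap4:
  fixes F :: "nat \<Rightarrow> nat \<Rightarrow> nat \<Rightarrow> nat \<Rightarrow> 'a::comm_monoid_add"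
  shows "(\<Sum>p<e. \<Sum>q<e. \<Sum>s<e. \<Sum>t<e. F p q s t) = (\<Sum>s<e. \<Sum>t<e. \<Sum>p<e. \<Sum>q<e. F p q s t)"
proof -
  have "(\<Sum>p<e. \<Sum>q<e. \<Sum>s<e. \<Sum>t<e. F p q s t) = (\<Sum>p<e. \<Sum>s<e. \<Sum>q<e. \<Sum>t<e. F p q s t)"
    by (rule sum.cong[OF refl], rule sum.swap)
  also have "\<dots> = (\<Sum>s<e. \<Sum>p<e. \<Sum>q<e. \<Sum>t<e. F p q s t)"
    by (rule sum.swap)
  also have "\<dots> = (\<Sum>s<e. \<Sum>p<e. \<Sum>t<e. \<Sum>q<e. F p q s t)"
    by (rule sum.cong[OF refl], rule sum.cong[OF refl], rule sum.swap)
  also have "\<dots> = (\<Sum>s<e. \<Sum>t<e. \<Sum>p<e. \<Sum>q<e. F p q s t)"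
    by (rule sum.cong[OF refl], rule sum.swap)
  finally show ?thesis .
qed

lemma keymod:
  fixes e :: nat and d1 d2 d2inv v t j :: int
  assumes "[d2 * d2inv = 1] (mod int e)"
  shows "(d2 * ((v - (- d2inv * d1) * t) mod int e) + j) mod int e = (d2 * v + d1 * t + j) mod int e"
proof -
  have "[d2 * ((v - (- d2inv * d1) * t) mod int e) + j = d2 * (v - (- d2inv * d1) * t) + j] (mod int e)"
    by (intro cong_add cong_mult cong_refl) (simp add: cong_def)
  moreover have "d2 * (v - (- d2inv * d1) * t) + j = d2 * v + (d2 * d2inv) * (d1 * t) + j"
    by (simp add: algebra_simps)
  moreover have "[d2 * v + (d2 * d2inv) * (d1 * t) + j = d2 * v + 1 * (d1 * t) + j] (mod int e)"
    using assms by (intro cong_add cong_mult cong_refl) auto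
  ultimately show ?thesis unfolding cong_def by simp
qed

lemma core:
  fixes A B C :: "nat \<Rightarrow> nat \<Rightarrow> 'a::comm_ring_1"
    and e :: nat and d1 d2 d2inv :: int
  assumes e: "e > 0" and inv: "[d2 * d2inv = 1] (mod int e)"
  shows "dcomp e d1 A (dcomp e d2 B C) i j = dcomp e d2 (dcomp e (- d2inv * d1) A B) C i j"
proof -
  define d' where "d' = - d2inv * d1"
  have L: "dcomp e d1 A (dcomp e d2 B C) i j = (\<Sum>s<e. \<Sum>t<e. A s t * (\<Sum>u<e. \<Sum>v<e. B u v *
     C (nat ((d2 * int u + d1 * int s + int i) mod int e)) (nat ((d2 * int v + d1 * int t + int j) mod int e))))"
    unfolding dcomp_def using e by (simp add: mod_add_right_eq add.assoc)
  have R: "dcomp e d2 (dcomp e d' A B) C i j = (\<Sum>s<e. \<Sum>t<e. A s t * (\<Sum>p<e. \<Sum>q<e.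
     B (nat ((d' * int s + int p) mod int e)) (nat ((d' * int t + int q) mod int e)) *
     C (nat ((d2 * int p + int i) mod int e)) (nat ((d2 * int q + int j) mod int e))))"
    unfolding dcomp_def sum_distrib_left sum_distrib_right mult.assoc
    by (rule swap4)
  have inner: "(\<Sum>p<e. \<Sum>q<e.
     B (nat ((d' * int s + int p) mod int e)) (nat ((d' * int t + int q) mod int e)) *
     C (nat ((d2 * int p + int i) mod int e)) (nat ((d2 * int q + int j) mod int e)))
     = (\<Sum>u<e. \<Sum>v<e. B u v *
     C (nat ((d2 * int u + d1 * int s + int i) mod int e)) (nat ((d2 * int v + d1 * int t + int j) mod int e)))"
    for s t
  proof -
    have "(\<Sum>p<e. \<Sum>q<e.
     B (nat ((d' * int s + int p) mod int e)) (nat ((d' * int t + int q) mod int e)) *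
     C (nat ((d2 * int p + int i) mod int e)) (nat ((d2 * int q + int j) mod int e)))
     = (\<Sum>p<e. \<Sum>v<e.
     B (nat ((d' * int s + int p) mod int e)) v *
     C (nat ((d2 * int p + int i) mod int e)) (nat ((d2 * int (nat ((int v - d' * int t) mod int e)) + int j) mod int e)))"
      by (rule sum.cong[OF refl], rule reidx[OF e, where h="\<lambda>x q. B _ x * C _ (nat ((d2 * int q + int j) mod int e))"])
    also have "\<dots> = (\<Sum>u<e. \<Sum>v<e.
     B u v *
     C (nat ((d2 * int (nat ((int u - d' * int s) mod int e)) + int i) mod int e)) (nat ((d2 * int (nat ((int v - d' * int t) mod int e)) + int j) mod int e)))"
      using reidx[OF e, where c="d' * int s" and h="\<lambda>x p. \<Sum>v<e. B x v * C (nat ((d2 * int p + int i) mod int e)) (nat ((d2 * int (nat ((int v - d' * int t) mod int e)) + int j) mod int e))"]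
      by simp
    also have "\<dots> = (\<Sum>u<e. \<Sum>v<e. B u v *
     C (nat ((d2 * int u + d1 * int s + int i) mod int e)) (nat ((d2 * int v + d1 * int t + int j) mod int e)))"
    proof -
      have k: "nat ((d2 * int (nat ((int u - d' * int s) mod int e)) + int i) mod int e) = nat ((d2 * int u + d1 * int s + int i) mod int e)" for u s i
      proof -
        have m: "int (nat ((int u - d' * int s) mod int e)) = (int u - d' * int s) mod int e"
          by (rule modfix[OF e])
        show ?thesis
          using keymod[where v="int u" and t="int s" and j="int i" and ?d1.0=d1, OF inv]
          unfolding d'_def[symmetric] m by simp
      qed
      show ?thesis by (simp only: k)
    qed
    finally show ?thesis .
  qed
  show ?thesis using L R inner unfolding d'_def by simp
qed

theorem proposition3p4:
  fixes A B C :: "nat \<Rightarrow> nat \<Rightarrow> 'a::field_char_0"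
    and e :: nat and d1 d2 d2inv :: int
  assumes "e \<ge> 2"
    and "coprime d1 (int e)" and "coprime d2 (int e)"
    and "[d2 * d2inv = 1] (mod int e)"
  shows "mat_eq e (dcomp e d1 A (dcomp e d2 B C))
                  (dcomp e d2 (dcomp e (- d2inv * d1) A B) C)
       \<and> mat_eq e (dcomp e d1 A (dcomp e (-1) B C))
                  (dcomp e (-1) (dcomp e d1 A B) C)
       \<and> mat_eq e (dcomp e (-1) A (dcomp e (-1) B C))
                  (dcomp e (-1) (dcomp e (-1) A B) C)"
proof -
  have e: "e > 0" using assms(1) by simp
  have m1: "[(-1) * (-1) = (1::int)] (mod int e)" by simp
  have g: "mat_eq e (dcomp e d1' A' (dcomp e d2' B' C')) (dcomp e d2' (dcomp e (- d2inv' * d1') A' B') C')"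
    if "[d2' * d2inv' = 1] (mod int e)" for d1' d2' d2inv' and A' B' C' :: "nat \<Rightarrow> nat \<Rightarrow> 'a"
    unfolding mat_eq_def using core[OF e that] by blast
  show ?thesis
    using g[OF assms(4), of d1 A B C] g[OF m1, of d1 A B C] g[OF m1, of "-1" A B C] by simp
qed

end
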